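(* Let $r\in\mathbb N$, $k\in\mathbb Z$ with $0\le k\le r$, and suppose Assumption (A1) holds. Then the mapping $$\hat\psi\mapsto \sum_{i=0}^{\lfloor (k-1)/2\rfloor-1}\|\hat\psi^{(i)}(-1)\|+\sum_{i=0}^{\lfloor k/2\rfloor-1}\|\hat\psi^{(i)}(1)\|+\sum_{i=\delta_{0,k}}^{r-k}\Big\|\widehat{\mathscr I}\big[\hat\psi(\hat t)(1+\hat t)^i\big]\Big\|$$ defines a norm on $P_{r-1}([-1,1],\mathbb R^d)$.
   Context: $\|\cdot\|$ is the Euclidean norm on $\mathbb R^d$; $P_s([-1,1],\mathbb R^d)$ denotes $\mathbb R^d$-valued polynomials of degree at most $s$; $\delta_{i,j}$ is the Kronecker symbol; empty sums are zero. $\widehat{\mathscr I}$ is a linear functional (reference integrator) defined on $C^{k_{\mathscr I}}([-1,1])$, acting componentwise on vector-valued functions. Assumption (A1): whenever $\hat\psi\in P_{r-\max\{1,k\}}([-1,1])$ satisfies $\widehat{\mathscr I}\big[(1-\hat t)^{\lfloor k/2\rfloor}(1+\hat t)^{|\lfloor (k-1)/2\rfloor|}\hat\psi\,\hat\varphi\big]=0$ for all $\hat\varphi\in P_{r-\max\{1,k\}}([-1,1])$, then $\hat\psi\equiv0$. *)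

theory Defs
  imports "HOL-Analysis.Analysis" "HOL-Computational_Algebra.Polynomial"
begin

definition Ppoly :: "int \<Rightarrow> real poly set" where
  "Ppoly s = {p. p = 0 \<or> int (degree p) \<le> s}"

definition Pvec :: "int \<Rightarrow> (real \<Rightarrow> real ^ 'd) set" where
  "Pvec s = {f. \<exists>p :: 'd \<Rightarrow> real poly. (\<forall>j. p j \<in> Ppoly s) \<and>
                 (\<forall>t. f t = (\<chi> j. poly (p j) t))}"

definition Ck_on :: "nat \<Rightarrow> (real \<Rightarrow> real) set" where
  "Ck_on m = {f. \<exists>D :: nat \<Rightarrow> real \<Rightarrow> real. D 0 = f \<and>
      (\<forall>j<m. \<forall>x\<in>{-1..1}. (D j has_real_derivative D (Suc j) x) (at x within {-1..1})) \<and>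
      continuous_on {-1..1} (D m)}"

definition vderiv :: "nat \<Rightarrow> (real \<Rightarrow> real ^ 'd) \<Rightarrow> real \<Rightarrow> real ^ 'd" where
  "vderiv i f x = (\<chi> j. (deriv ^^ i) (\<lambda>t. f t $ j) x)"

definition vapply :: "((real \<Rightarrow> real) \<Rightarrow> real) \<Rightarrow> (real \<Rightarrow> real ^ 'd) \<Rightarrow> real ^ 'd" where
  "vapply I f = (\<chi> j. I (\<lambda>t. f t $ j))"

definition is_norm_on :: "(real \<Rightarrow> real ^ 'd) set \<Rightarrow> ((real \<Rightarrow> real ^ 'd) \<Rightarrow> real) \<Rightarrow> bool" where
  "is_norm_on V N \<longleftrightarrow>
     (\<forall>f\<in>V. 0 \<le> N f) \<and>
     (\<forall>f\<in>V. \<forall>c. N (\<lambda>t. c *\<^sub>R f t) = \<bar>c\<bar> * N f) \<and>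
     (\<forall>f\<in>V. \<forall>g\<in>V. N (\<lambda>t. f t + g t) \<le> N f + N g) \<and>
     (\<forall>f\<in>V. N f = 0 \<longrightarrow> f = (\<lambda>t. 0))"

definition Nmap :: "((real \<Rightarrow> real) \<Rightarrow> real) \<Rightarrow> nat \<Rightarrow> int \<Rightarrow> (real \<Rightarrow> real ^ 'd) \<Rightarrow> real" where
  "Nmap I r k f =
     (\<Sum>i\<in>{0..<nat ((k - 1) div 2)}. norm (vderiv i f (-1)))
   + (\<Sum>i\<in>{0..<nat (k div 2)}. norm (vderiv i f 1))
   + (\<Sum>i\<in>{(if k = 0 then 1 else 0)..nat (int r - k)}.
        norm (vapply I (\<lambda>t. (1 + t) ^ i *\<^sub>R f t)))"

end

theory Submission
  imports Defs
begin

lemma deriv_funpow_poly: "(deriv ^^ i) (\<lambda>t. poly p t) = (\<lambda>t. poly ((pderiv ^^ i) p) t)"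
proof (induction i)
  case 0 then show ?case by simp
next
  case (Suc i)
  have "(deriv ^^ Suc i) (\<lambda>t. poly p t) = deriv (\<lambda>t. poly ((pderiv ^^ i) p) t)"
    using Suc by simp
  also have "\<dots> = (\<lambda>t. poly (pderiv ((pderiv ^^ i) p)) t)"
    by (rule ext, rule DERIV_imp_deriv, rule poly_DERIV)
  finally show ?case by simp
qed

lemma poly_Ck: "(\<lambda>t. poly p t) \<in> Ck_on m"
  unfolding Ck_on_def
proof (intro CollectI exI[of _ "\<lambda>j t. poly ((pderiv ^^ j) p) t"] conjI allI impI ballI)
  show "(\<lambda>t. poly ((pderiv ^^ 0) p) t) = (\<lambda>t. poly p t)" by simp
  fix j x assume "j < m" "x \<in> {-1..(1::real)}"
  show "((\<lambda>t. poly ((pderiv ^^ j) p) t) has_real_derivative poly ((pderiv ^^ Suc j) p) x) (at x within {- 1..1})"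
    using has_field_derivative_at_within[OF poly_DERIV[of "(pderiv ^^ j) p" x]] by simp
next
  show "continuous_on {- 1..1} (\<lambda>t. poly ((pderiv ^^ m) p) t)"
    by (intro continuous_intros)
qed

lemma order_ge:
  fixes q :: "real poly"
  assumes "q \<noteq> 0" "\<forall>i<n. poly ((pderiv ^^ i) q) c = 0"
  shows "n \<le> order c q"
  using assms
proof (induction n arbitrary: q)
  case 0 then show ?case by simp
next
  case (Suc n)
  have r: "poly q c = 0" using Suc.prems(2) by auto
  show ?case
  proof (cases "pderiv q = 0")
    case True
    then obtain a where "q = [:a:]" using pderiv_iszero by blast
    then show ?thesis using r Suc.prems(1) by simp
  next
    case False
    have "\<forall>i<n. poly ((pderiv ^^ i) (pderiv q)) c = 0"
    proof (intro allI impI)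
      fix i assume "i < n"
      then have "poly ((pderiv ^^ Suc i) q) c = 0" using Suc.prems(2) by auto
      then show "poly ((pderiv ^^ i) (pderiv q)) c = 0"
        by (simp only: funpow_Suc_right comp_def)
    qed
    then have "n \<le> order c (pderiv q)" using Suc.IH False by blast
    then show ?thesis using order_pderiv[OF Suc.prems(1) r] by simp
  qed
qed

lemma factor_lemma:
  fixes q :: "real poly"
  assumes q: "q \<noteq> 0" and oa: "a \<le> order (-1) q" and ob: "b \<le> order 1 q"
  shows "\<exists>\<psi>. q = [:1,-1:]^b * [:1,1:]^a * \<psi> \<and> degree q = a + b + degree \<psi>"
proof -
  have "[:-(-1),1:]^a dvd q" using oa order_divides by blast
  then obtain q1 where q1: "q = [:1,1:]^a * q1" by (auto elim: dvdE)
  have q1nz: "q1 \<noteq> 0" using q q1 by auto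
  have "order 1 ([:1,1::real:]^a) = 0"
    using order_root[of "[:1,1::real:]^a" 1] by (simp add: poly_power)
  then have "order 1 q = order 1 q1" using q1 q order_mult[of "[:1,1:]^a" q1 1] by simp
  then have "[:-1,1:]^b dvd q1" using ob order_divides[of 1 b q1] by simp
  then obtain q2 where q2: "q1 = [:-1,1:]^b * q2" by (auto elim: dvdE)
  have e: "[:-1,1::real:]^b = smult ((-1)^b) ([:1,-1:]^b)"
  proof -
    have "[:-1,1::real:] = smult (-1) [:1,-1:]" by simp
    then show ?thesis by (metis smult_power)
  qed
  define \<psi> where "\<psi> = smult ((-1)^b) q2"
  have qe: "q = [:1,-1:]^b * [:1,1:]^a * \<psi>"
    unfolding \<psi>_def using q1 q2 e by (simp add: mult_ac)
  have "\<psi> \<noteq> 0" using q qe by auto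
  then have "degree q = degree ([:1,-1::real:]^b) + degree ([:1,1::real:]^a) + degree \<psi>"
    unfolding qe by (simp add: degree_mult_eq)
  also have "\<dots> = a + b + degree \<psi>" by (simp add: degree_power_eq)
  finally show ?thesis using qe by blast
qed

lemma J_sum:
  fixes J :: "real poly \<Rightarrow> real"
  assumes linJ: "\<And>p q a b. J (smult a p + smult b q) = a * J p + b * J q"
    and fin: "finite S"
  shows "J (\<Sum>i\<in>S. smult (c i) (P i)) = (\<Sum>i\<in>S. c i * J (P i))"
  using fin
proof (induction S rule: finite_induct)
  case empty
  have "J (smult 0 0 + smult 0 0) = 0" using linJ[of 0 0 0 0] by simp
  then show ?case by simp
next
  case (insert x F)
  have "J (\<Sum>i\<in>insert x F. smult (c i) (P i)) = J (smult (c x) (P x) + smult 1 (\<Sum>i\<in>F. smult (c i) (P i)))"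
    using insert by simp
  also have "\<dots> = c x * J (P x) + (\<Sum>i\<in>F. c i * J (P i))" using linJ[of "c x" "P x" 1 "\<Sum>i\<in>F. smult (c i) (P i)"] insert by simp
  finally show ?case using insert by simp
qed

lemma key_span:
  fixes J :: "real poly \<Rightarrow> real" and m :: int
  assumes linJ: "\<And>p q a b. J (smult a p + smult b q) = a * J p + b * J q"
    and hz: "\<And>i. int i \<le> m \<Longrightarrow> J (u * [:1,1:]^i) = 0"
    and phi: "\<phi> \<in> Ppoly m"
  shows "J (u * \<phi>) = 0"
proof (cases "\<phi> = 0")
  case True
  have "J (smult 0 0 + smult 0 0) = 0" using linJ[of 0 0 0 0] by simp
  then show ?thesis using True by simp
next
  case False
  then have dm: "int (degree \<phi>) \<le> m" using phi by (simp add: Ppoly_def)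
  define \<phi>' where "\<phi>' = pcompose \<phi> [:-1,1:]"
  have dg: "degree \<phi>' = degree \<phi>" unfolding \<phi>'_def by (simp add: degree_pcompose)
  have "poly (u * \<phi>) t = poly (\<Sum>i\<le>degree \<phi>'. smult (coeff \<phi>' i) (u * [:1,1:]^i)) t" for t
  proof -
    have "poly \<phi> t = poly \<phi>' (1 + t)" unfolding \<phi>'_def by (simp add: poly_pcompose)
    also have "\<dots> = (\<Sum>i\<le>degree \<phi>'. coeff \<phi>' i * (1+t)^i)" by (rule poly_altdef)
    finally show ?thesis
      by (simp add: poly_sum poly_power sum_distrib_left mult_ac)
  qed
  then have "u * \<phi> = (\<Sum>i\<le>degree \<phi>'. smult (coeff \<phi>' i) (u * [:1,1:]^i))"
    using poly_eq_poly_eq_iff by blast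
  then have "J (u * \<phi>) = (\<Sum>i\<le>degree \<phi>'. coeff \<phi>' i * J (u * [:1,1:]^i))"
    using J_sum[OF linJ finite_atMost, where c="\<lambda>i. coeff \<phi>' i" and P="\<lambda>i. u * [:1,1:]^i"] by simp
  also have "\<dots> = 0" using hz dm dg by (intro sum.neutral) auto
  finally show ?thesis .
qed

lemma core:
  fixes J :: "real poly \<Rightarrow> real" and r :: nat and k :: int and q :: "real poly"
  assumes linJ: "\<And>p q a b. J (smult a p + smult b q) = a * J p + b * J q"
    and k0: "0 \<le> k" and kr: "k \<le> int r"
    and A1J: "\<forall>\<psi>\<in>Ppoly (int r - max 1 k). (\<forall>\<phi>\<in>Ppoly (int r - max 1 k).
        J ([:1,-1:]^nat (k div 2) * [:1,1:]^nat \<bar>(k-1) div 2\<bar> * \<psi> * \<phi>) = 0) \<longrightarrow> \<psi> = 0"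
    and qP: "q \<in> Ppoly (int r - 1)"
    and D1: "\<forall>i<nat ((k-1) div 2). poly ((pderiv^^i) q) (-1) = 0"
    and D2: "\<forall>i<nat (k div 2). poly ((pderiv^^i) q) 1 = 0"
    and D3: "\<forall>i\<in>{(if k = 0 then 1 else 0)..nat (int r - k)}. J ([:1,1:]^i * q) = 0"
  shows "q = 0"
proof (cases "k = 0")
  case True
  have w: "[:1,-1:]^nat (k div 2) * [:1,1:]^nat \<bar>(k-1) div 2\<bar> = [:1,1::real:]"
    using True by simp
  have m: "int r - max 1 k = int r - 1" using True by simp
  have "\<forall>\<phi>\<in>Ppoly (int r - 1). J ([:1,1:] * q * \<phi>) = 0"
  proof
    fix \<phi> assume "\<phi> \<in> Ppoly (int r - 1)"
    then show "J ([:1,1:] * q * \<phi>) = 0"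
    proof (rule key_span[OF linJ, rotated])
      fix i assume "int i \<le> int r - 1"
      then have "Suc i \<in> {(if k = 0 then 1 else 0)..nat (int r - k)}" using True by auto
      then have "J ([:1,1:]^Suc i * q) = 0" using D3 by blast
      moreover have "[:1,1:] * q * [:1,1:]^i = [:1,1:]^Suc i * q"
        by (simp only: power_Suc mult.commute mult.left_commute mult.assoc)
      ultimately show "J ([:1,1:] * q * [:1,1:]^i) = 0" by simp
    qed
  qed
  then show ?thesis using A1J qP unfolding w m by blast
next
  case False
  show ?thesis
  proof (rule ccontr)
    assume qnz: "q \<noteq> 0"
    define A where "A = nat ((k-1) div 2)"
    define B where "B = nat (k div 2)"
    have h1: "(k-1) div 2 \<ge> 0" "k div 2 \<ge> 0" using False k0 by auto
    have h2: "(k-1) div 2 + k div 2 = k - 1" by presburger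
    have AB: "A + B = nat (k - 1)" unfolding A_def B_def
      using nat_add_distrib[OF h1] h2 by simp
    have Aabs: "nat \<bar>(k-1) div 2\<bar> = A" unfolding A_def using h1(1) by simp
    have oA: "A \<le> order (-1) q" using order_ge[OF qnz] D1 unfolding A_def by blast
    have oB: "B \<le> order 1 q" using order_ge[OF qnz] D2 unfolding B_def by blast
    obtain \<psi> where qe: "q = [:1,-1:]^B * [:1,1:]^A * \<psi>" and dq: "degree q = A + B + degree \<psi>"
      using factor_lemma[OF qnz oA oB] by blast
    have "int (degree q) \<le> int r - 1" using qP qnz by (simp add: Ppoly_def)
    then have psiP: "\<psi> \<in> Ppoly (int r - max 1 k)"
      using dq AB False k0 unfolding Ppoly_def by auto
    have "\<forall>\<phi>\<in>Ppoly (int r - max 1 k). J ([:1,-1:]^B * [:1,1:]^A * \<psi> * \<phi>) = 0"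
    proof
      fix \<phi> assume "\<phi> \<in> Ppoly (int r - max 1 k)"
      then show "J ([:1,-1:]^B * [:1,1:]^A * \<psi> * \<phi>) = 0"
      proof (rule key_span[OF linJ, rotated])
        fix i assume "int i \<le> int r - max 1 k"
        then have "i \<in> {(if k = 0 then 1 else 0)..nat (int r - k)}" using False k0 by auto
        then have "J ([:1,1:]^i * q) = 0" using D3 by blast
        then show "J ([:1,-1:]^B * [:1,1:]^A * \<psi> * [:1,1:]^i) = 0"
          unfolding qe by (simp add: mult_ac)
      qed
    qed
    then have "\<psi> = 0" using A1J psiP unfolding Aabs B_def[symmetric] by blast
    then show False using qe qnz by simp
  qed
qed

lemma sum_norm_tri:
  fixes a b :: "nat \<Rightarrow> 'a::real_normed_vector"
  shows "(\<Sum>i\<in>S. norm (a i + b i)) \<le> (\<Sum>i\<in>S. norm (a i)) + (\<Sum>i\<in>S. norm (b i))"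
  by (simp add: sum.distrib[symmetric] sum_mono norm_triangle_ineq)

lemma sum_norm_zero:
  fixes a :: "nat \<Rightarrow> 'a::real_normed_vector"
  assumes "finite S" "(\<Sum>i\<in>S. norm (a i)) = 0" "i \<in> S"
  shows "a i = 0"
  using assms sum_nonneg_eq_0_iff[of S "\<lambda>i. norm (a i)"] by simp

definition NPf :: "((real \<Rightarrow> real) \<Rightarrow> real) \<Rightarrow> nat \<Rightarrow> int \<Rightarrow> ('d::finite \<Rightarrow> real poly) \<Rightarrow> real" where
  "NPf I r k p =
     (\<Sum>i\<in>{0..<nat ((k - 1) div 2)}. norm ((\<chi> j. poly ((pderiv^^i) (p j)) (-1)) :: real^'d))
   + (\<Sum>i\<in>{0..<nat (k div 2)}. norm ((\<chi> j. poly ((pderiv^^i) (p j)) 1) :: real^'d))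
   + (\<Sum>i\<in>{(if k = 0 then 1 else 0)..nat (int r - k)}.
        norm ((\<chi> j. I (\<lambda>t. poly ([:1,1:]^i * p j) t)) :: real^'d))"

lemma Nmap_rep:
  fixes f :: "real \<Rightarrow> real^'d"
  assumes "\<And>t. f t = (\<chi> j. poly (p j) t)"
  shows "Nmap I r k f = NPf I r k p"
proof -
  have f: "f = (\<lambda>t. \<chi> j. poly (p j) t)" using assms by auto
  have vd: "vderiv i f x = (\<chi> j. poly ((pderiv^^i) (p j)) x)" for i x
    unfolding vderiv_def f by (simp add: deriv_funpow_poly)
  have va: "vapply I (\<lambda>t. (1 + t) ^ i *\<^sub>R f t) = (\<chi> j. I (\<lambda>t. poly ([:1,1:]^i * p j) t))" for i
    unfolding vapply_def f by (simp add: poly_power)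
  show ?thesis unfolding Nmap_def NPf_def vd va ..
qed

lemma Pvec_rep:
  assumes "f \<in> Pvec s"
  obtains p where "\<And>j. p j \<in> Ppoly s" "\<And>t. f t = (\<chi> j. poly (p j) t)"
  using assms unfolding Pvec_def by blast

theorem mainTheorem2:
  fixes I :: "(real \<Rightarrow> real) \<Rightarrow> real" and kI :: nat and r :: nat and k :: int
  assumes lin: "\<forall>f\<in>Ck_on kI. \<forall>g\<in>Ck_on kI. \<forall>a b.
                  I (\<lambda>t. a * f t + b * g t) = a * I f + b * I g"
    and k0: "0 \<le> k" and kr: "k \<le> int r"
    and A1: "\<forall>\<psi>\<in>Ppoly (int r - max 1 k).
               (\<forall>\<phi>\<in>Ppoly (int r - max 1 k).
                  I (\<lambda>t. (1 - t) ^ nat (k div 2) * (1 + t) ^ nat \<bar>(k - 1) div 2\<bar>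
                          * poly \<psi> t * poly \<phi> t) = 0)
               \<longrightarrow> \<psi> = 0"
  shows "is_norm_on (Pvec (int r - 1) :: (real \<Rightarrow> real ^ 'd) set) (Nmap I r k)"
proof -
  define J where "J p = I (\<lambda>t. poly p t)" for p
  have linJ: "J (smult a p + smult b q) = a * J p + b * J q" for a b p q
  proof -
    have "J (smult a p + smult b q) = I (\<lambda>t. a * poly p t + b * poly q t)"
      unfolding J_def by (rule arg_cong[where f=I]) (simp add: fun_eq_iff)
    also have "\<dots> = a * J p + b * J q" unfolding J_def using lin poly_Ck by blast
    finally show ?thesis .
  qed
  have JH: "J (u * smult c q) = c * J (u * q)" for u c q
    using linJ[of c "u*q" 0 0] by simp
  have JA: "J (u * (q1 + q2)) = J (u * q1) + J (u * q2)" for u q1 q2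
    using linJ[of 1 "u*q1" 1 "u*q2"] by (simp add: distrib_left)
  let ?V = "Pvec (int r - 1) :: (real \<Rightarrow> real ^ 'd) set"
  have nonneg: "\<forall>f\<in>?V. 0 \<le> Nmap I r k f"
    unfolding Nmap_def by (auto intro!: add_nonneg_nonneg sum_nonneg)
  have homog: "\<forall>f\<in>?V. \<forall>c. Nmap I r k (\<lambda>t. c *\<^sub>R f t) = \<bar>c\<bar> * Nmap I r k f"
  proof (intro ballI allI)
    fix f :: "real \<Rightarrow> real^'d" and c assume "f \<in> ?V"
    then obtain p where p: "\<And>t. f t = (\<chi> j. poly (p j) t)" by (metis Pvec_rep)
    have p2: "\<And>t. c *\<^sub>R f t = (\<chi> j. poly (smult c (p j)) t)"
      using p by (simp add: vec_eq_iff)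
    have e1: "(\<chi> j. poly ((pderiv^^i) (smult c (p j))) x) = c *\<^sub>R ((\<chi> j. poly ((pderiv^^i) (p j)) x) :: real^'d)" for i x
      by (simp add: vec_eq_iff higher_pderiv_smult)
    have e2: "(\<chi> j. I (\<lambda>t. poly ([:1,1:]^i * smult c (p j)) t)) = c *\<^sub>R ((\<chi> j. I (\<lambda>t. poly ([:1,1:]^i * p j) t)) :: real^'d)" for i
      using JH unfolding J_def by (simp only: vec_eq_iff vector_scaleR_component vec_lambda_beta real_scaleR_def JH[unfolded J_def] simp_thms)
    show "Nmap I r k (\<lambda>t. c *\<^sub>R f t) = \<bar>c\<bar> * Nmap I r k f"
      unfolding Nmap_rep[OF p2] Nmap_rep[OF p] NPf_def e1 e2
      by (simp add: sum_distrib_left distrib_left)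
  qed
  have tri: "\<forall>f\<in>?V. \<forall>g\<in>?V. Nmap I r k (\<lambda>t. f t + g t) \<le> Nmap I r k f + Nmap I r k g"
  proof (intro ballI)
    fix f g :: "real \<Rightarrow> real^'d" assume "f \<in> ?V" "g \<in> ?V"
    obtain p where p: "\<And>t. f t = (\<chi> j. poly (p j) t)" using \<open>f \<in> ?V\<close> by (metis Pvec_rep)
    obtain q where q: "\<And>t. g t = (\<chi> j. poly (q j) t)" using \<open>g \<in> ?V\<close> by (metis Pvec_rep)
    have pq: "\<And>t. f t + g t = (\<chi> j. poly (p j + q j) t)"
      using p q by (simp add: vec_eq_iff)
    have e1: "(\<chi> j. poly ((pderiv^^i) (p j + q j)) x) = ((\<chi> j. poly ((pderiv^^i) (p j)) x) :: real^'d) + (\<chi> j. poly ((pderiv^^i) (q j)) x)" for i x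
      by (simp add: vec_eq_iff higher_pderiv_add)
    have e2: "(\<chi> j. I (\<lambda>t. poly ([:1,1:]^i * (p j + q j)) t)) = ((\<chi> j. I (\<lambda>t. poly ([:1,1:]^i * p j) t)) :: real^'d) + (\<chi> j. I (\<lambda>t. poly ([:1,1:]^i * q j) t))" for i
      unfolding J_def by (simp only: vec_eq_iff vector_add_component vec_lambda_beta JA[unfolded J_def] simp_thms)
    show "Nmap I r k (\<lambda>t. f t + g t) \<le> Nmap I r k f + Nmap I r k g"
      unfolding Nmap_rep[OF pq] Nmap_rep[OF p] Nmap_rep[OF q] NPf_def e1 e2
      using sum_norm_tri[of "\<lambda>i. (\<chi> j. poly ((pderiv^^i) (p j)) (-1)) :: real^'d" "\<lambda>i. \<chi> j. poly ((pderiv^^i) (q j)) (-1)" "{0..<nat ((k - 1) div 2)}"]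
        sum_norm_tri[of "\<lambda>i. (\<chi> j. poly ((pderiv^^i) (p j)) 1) :: real^'d" "\<lambda>i. \<chi> j. poly ((pderiv^^i) (q j)) 1" "{0..<nat (k div 2)}"]
        sum_norm_tri[of "\<lambda>i. (\<chi> j. I (\<lambda>t. poly ([:1,1:]^i * p j) t)) :: real^'d" "\<lambda>i. \<chi> j. I (\<lambda>t. poly ([:1,1:]^i * q j) t)" "{(if k = 0 then 1 else 0)..nat (int r - k)}"]
      by linarith
  qed
  have defin: "\<forall>f\<in>?V. Nmap I r k f = 0 \<longrightarrow> f = (\<lambda>t. 0)"
  proof (intro ballI impI)
    fix f :: "real \<Rightarrow> real^'d" assume "f \<in> ?V" and N0: "Nmap I r k f = 0"
    then obtain p where pP: "\<And>j. p j \<in> Ppoly (int r - 1)" and p: "\<And>t. f t = (\<chi> j. poly (p j) t)"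
      using Pvec_rep[OF \<open>f \<in> ?V\<close>] by blast
    have N0': "NPf I r k p = 0" using N0 Nmap_rep[OF p] by simp
    let ?S1 = "\<Sum>i\<in>{0..<nat ((k - 1) div 2)}. norm ((\<chi> j. poly ((pderiv^^i) (p j)) (-1)) :: real^'d)"
    let ?S2 = "\<Sum>i\<in>{0..<nat (k div 2)}. norm ((\<chi> j. poly ((pderiv^^i) (p j)) 1) :: real^'d)"
    let ?S3 = "\<Sum>i\<in>{(if k = 0 then 1 else 0)..nat (int r - k)}.
        norm ((\<chi> j. I (\<lambda>t. poly ([:1,1:]^i * p j) t)) :: real^'d)"
    have "?S1 \<ge> 0" "?S2 \<ge> 0" "?S3 \<ge> 0" by (auto intro!: sum_nonneg)
    then have z: "?S1 = 0" "?S2 = 0" "?S3 = 0" using N0' unfolding NPf_def by linarith+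
    have allz: "\<forall>j. p j = 0"
    proof
      fix j
      have z1: "\<forall>i<nat ((k-1) div 2). poly ((pderiv^^i) (p j)) (-1) = 0"
      proof (intro allI impI)
        fix i assume "i < nat ((k-1) div 2)"
        then have "((\<chi> j. poly ((pderiv^^i) (p j)) (-1)) :: real^'d) = 0"
          using sum_norm_zero[OF _ z(1)] by simp
        then show "poly ((pderiv^^i) (p j)) (-1) = 0" by (simp add: vec_eq_iff)
      qed
      have z2: "\<forall>i<nat (k div 2). poly ((pderiv^^i) (p j)) 1 = 0"
      proof (intro allI impI)
        fix i assume "i < nat (k div 2)"
        then have "((\<chi> j. poly ((pderiv^^i) (p j)) 1) :: real^'d) = 0"
          using sum_norm_zero[OF _ z(2)] by simp
        then show "poly ((pderiv^^i) (p j)) 1 = 0" by (simp add: vec_eq_iff)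
      qed
      have z3: "\<forall>i\<in>{(if k = 0 then 1 else 0)..nat (int r - k)}. J ([:1,1:]^i * p j) = 0"
      proof
        fix i assume "i \<in> {(if k = 0 then 1 else 0)..nat (int r - k)}"
        then have "((\<chi> j. I (\<lambda>t. poly ([:1,1:]^i * p j) t)) :: real^'d) = 0"
          using sum_norm_zero[OF _ z(3)] by simp
        then show "J ([:1,1:]^i * p j) = 0" unfolding J_def by (simp only: vec_eq_iff vec_lambda_beta zero_index)
      qed
      have A1J: "\<forall>\<psi>\<in>Ppoly (int r - max 1 k). (\<forall>\<phi>\<in>Ppoly (int r - max 1 k).
        J ([:1,-1:]^nat (k div 2) * [:1,1:]^nat \<bar>(k-1) div 2\<bar> * \<psi> * \<phi>) = 0) \<longrightarrow> \<psi> = 0"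
      proof -
        have weq: "(\<lambda>t. poly ([:1,-1:]^nat (k div 2) * [:1,1:]^nat \<bar>(k-1) div 2\<bar> * \<psi> * \<phi>) (t::real))
           = (\<lambda>t. (1 - t) ^ nat (k div 2) * (1 + t) ^ nat \<bar>(k - 1) div 2\<bar> * poly \<psi> t * poly \<phi> t)"
          for \<psi> \<phi>
        proof -
          have p1: "poly [:1,-1:] x = 1 - (x::real)" for x by simp
          have p2: "poly [:1,1:] x = 1 + (x::real)" for x by simp
          show ?thesis unfolding fun_eq_iff poly_mult poly_power p1 p2 by simp
        qed
        show ?thesis unfolding J_def weq by (rule A1)
      qed
      show "p j = 0" using core[OF linJ k0 kr A1J pP z1 z2 z3] .
    qed
    show "f = (\<lambda>t. 0)" using p allz by (simp add: vec_eq_iff fun_eq_iff)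
  qed
  show ?thesis unfolding is_norm_on_def using nonneg homog tri defin by blast
qed

end
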